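(* Let $H$ be a monoid, let $a,c\in H$ and $b,d\in\mathrm{Gpr}\,H$ be such that for every $e\in\mathrm{Gpr}\,H$: if $e\mid ab$ then $e\mid b$, and if $e\mid cd$ then $e\mid d$. If $ab\sim cd$, then $a\sim c$ and $b\sim d$.
   Context: A monoid means a commutative cancellative monoid (written multiplicatively); $H^{\ast}$ is its unit group. $x\sim y$ means $x=uy$ for some $u\in H^{\ast}$. $\mathrm{Gpr}\,H$ is the set of radical generators of $H$: elements $r$ such that for all $b\in H$, $n\in\mathbb{N}$, $r\mid b^n$ implies $r\mid b$. *)

theory Defs
  imports Main
begin

text \<open>Monoids are modelled as a type of class comm_monoid_mult together with an explicit
cancellativity hypothesis. Units are the elements u with u dvd 1 (u dvd 1).\<close>

definition assoc_el :: "'a::comm_monoid_mult \<Rightarrow> 'a \<Rightarrow> bool" where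
  "assoc_el x y \<longleftrightarrow> (\<exists>u. u dvd 1 \<and> x = u * y)"

definition Gpr :: "'a::comm_monoid_mult set" where
  "Gpr = {r. \<forall>b (n::nat). n \<ge> 1 \<longrightarrow> r dvd b ^ n \<longrightarrow> r dvd b}"

end

theory Submission
  imports Defs
begin

theorem proposition5p1:
  fixes a b c d :: "'a::comm_monoid_mult"
  assumes cancel: "\<And>x y z :: 'a. x * y = x * z \<Longrightarrow> y = z"
    and "b \<in> Gpr" and "d \<in> Gpr"
    and "\<forall>e \<in> Gpr. e dvd a * b \<longrightarrow> e dvd b"
    and "\<forall>e \<in> Gpr. e dvd c * d \<longrightarrow> e dvd d"
    and "assoc_el (a * b) (c * d)"
  shows "assoc_el a c \<and> assoc_el b d"
proof -
  obtain u where u: "u dvd 1" "a * b = u * (c * d)" using assms(6) unfolding assoc_el_def by blast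
  obtain w where w: "1 = u * w" using u(1) by (auto elim: dvdE)
  have "w * (a * b) = (u * w) * (c * d)" using u(2) by (simp add: ac_simps)
  hence cd: "c * d = w * (a * b)" using w by simp
  have "a * b = d * (u * c)" using u(2) by (simp add: ac_simps)
  hence "d dvd a * b" by (rule dvdI)
  hence "d dvd b" using assms(3,4) by simp
  then obtain x where x: "b = d * x" by (auto elim: dvdE)
  have "c * d = b * (w * a)" using cd by (simp add: ac_simps)
  hence "b dvd c * d" by (rule dvdI)
  hence "b dvd d" using assms(2,5) by simp
  then obtain y where y: "d = b * y" by (auto elim: dvdE)
  have "b * 1 = b * (y * x)" using x y by (simp add: mult.assoc)
  hence yx: "y * x = 1" by (rule cancel[symmetric])
  have "b * a = u * (c * d)" using u(2) by (simp add: ac_simps)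
  also have "\<dots> = b * (u * y * c)" using y by (simp add: ac_simps)
  finally have "a = u * y * c" by (rule cancel)
  moreover have "y dvd 1" using yx by (rule dvdI[OF sym])
  moreover have "u * y dvd 1" proof (rule dvdI)
    show "1 = u * y * (w * x)" using w yx by (metis mult.assoc mult.left_commute mult_1_right)
  qed
  moreover have "x dvd 1" using yx by (simp add: dvdI[OF sym] mult.commute)
  moreover have "b = x * d" using x by (simp add: ac_simps)
  ultimately show ?thesis unfolding assoc_el_def by blast
qed

end
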